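(* Let $\mathcal{Z}$ be a finite set of latent values and fix an observation $\mathbf{x}$ and parameters $\theta,\phi$. Let $p_\theta(\mathbf{x},\mathbf{z})\ge 0$ be a joint density with $p_\theta(\mathbf{x})=\sum_{\mathbf{z}\in\mathcal{Z}} p_\theta(\mathbf{x},\mathbf{z})>0$, and let $q_\phi(\mathbf{z}\mid\mathbf{x})$ be a probability distribution on $\mathcal{Z}$ with $q_\phi(\mathbf{z}\mid\mathbf{x})>0$ for all $\mathbf{z}$. For $T\in\mathbb{R}$ let $a_{\theta,\phi}(\mathbf{z}\mid\mathbf{x},T)=\dfrac{e^{T}p_\theta(\mathbf{x},\mathbf{z})}{e^{T}p_\theta(\mathbf{x},\mathbf{z})+q_\phi(\mathbf{z}\mid\mathbf{x})}$, $Z_R(\mathbf{x},T)=\sum_{\mathbf{z}}q_\phi(\mathbf{z}\mid\mathbf{x})a_{\theta,\phi}(\mathbf{z}\mid\mathbf{x},T)$, $r_{\theta,\phi}(\mathbf{z}\mid\mathbf{x},T)=q_\phi(\mathbf{z}\mid\mathbf{x})a_{\theta,\phi}(\mathbf{z}\mid\mathbf{x},T)/Z_R(\mathbf{x},T)$, and $$\text{R-ELBO}(T)=\mathbb{E}_{\mathbf{z}\sim R_{\theta,\phi}(\cdot\mid\mathbf{x},T)}\left[\log\frac{p_\theta(\mathbf{x},\mathbf{z})\,Z_R(\mathbf{x},T)}{q_\phi(\mathbf{z}\mid\mathbf{x})\,a_{\theta,\phi}(\mathbf{z}\mid\mathbf{x},T)}\right]\le \log p_\theta(\mathbf{x}).$$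 Then the R-ELBO gets tighter as $T$ decreases, i.e. $\text{R-ELBO}(T)$ is non-increasing in $T$, but it becomes more expensive to compute: the expected number of proposals $1/Z_R(\mathbf{x},T)$ drawn by the rejection sampler to produce one sample from $R_{\theta,\phi}(\cdot\mid\mathbf{x},T)$ is non-increasing in $T$.
   Context: The rejection sampler for $R_{\theta,\phi}(\cdot\mid\mathbf{x},T)$ repeatedly draws $\mathbf{z}\sim Q_\phi(\cdot\mid\mathbf{x})$ and $u\sim U[0,1]$ independently and outputs $\mathbf{z}$ the first time $u<a_{\theta,\phi}(\mathbf{z}\mid\mathbf{x},T)$; each proposal is accepted with probability $Z_R(\mathbf{x},T)$. *)

theory Defs
  imports Complex_Main
begin

text \<open>Observation x and parameters theta, phi are fixed; we write
  p z for p_theta(x,z) and q z for q_phi(z | x), on a finite latent set Zs.\<close>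

definition accept :: "('z \<Rightarrow> real) \<Rightarrow> ('z \<Rightarrow> real) \<Rightarrow> real \<Rightarrow> 'z \<Rightarrow> real" where
  "accept p q T z = exp T * p z / (exp T * p z + q z)"

definition ZR :: "'z set \<Rightarrow> ('z \<Rightarrow> real) \<Rightarrow> ('z \<Rightarrow> real) \<Rightarrow> real \<Rightarrow> real" where
  "ZR Zs p q T = (\<Sum>z\<in>Zs. q z * accept p q T z)"

definition rdens :: "'z set \<Rightarrow> ('z \<Rightarrow> real) \<Rightarrow> ('z \<Rightarrow> real) \<Rightarrow> real \<Rightarrow> 'z \<Rightarrow> real" where
  "rdens Zs p q T z = q z * accept p q T z / ZR Zs p q T"

text \<open>Expectation under R of log(p Z_R / (q a)); terms with r z = 0 contribute 0.\<close>
definition RELBO :: "'z set \<Rightarrow> ('z \<Rightarrow> real) \<Rightarrow> ('z \<Rightarrow> real) \<Rightarrow> real \<Rightarrow> real" where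
  "RELBO Zs p q T = (\<Sum>z\<in>Zs. rdens Zs p q T z *
      ln (p z * ZR Zs p q T / (q z * accept p q T z)))"

text \<open>Expected number of proposals of the rejection sampler (geometric with success prob Z_R).\<close>
definition expected_proposals :: "'z set \<Rightarrow> ('z \<Rightarrow> real) \<Rightarrow> ('z \<Rightarrow> real) \<Rightarrow> real \<Rightarrow> real" where
  "expected_proposals Zs p q T = 1 / ZR Zs p q T"

end

theory Submission
  imports Defs
begin

lemma acc_bounds:
  fixes P Q T :: real assumes "P > 0" "Q > 0"
  shows "0 < exp T * P / (exp T * P + Q)" "exp T * P / (exp T * P + Q) < 1"
  using assms by (auto simp: field_simps add_pos_pos)

lemma acc_deriv:
  fixes P Q T :: real assumes "P > 0" "Q > 0"
  defines "a \<equiv> exp T * P / (exp T * P + Q)"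
  shows "((\<lambda>T. exp T * P / (exp T * P + Q)) has_real_derivative a * (1 - a)) (at T)"
proof -
  have pos: "exp T * P + Q > 0" using assms by (simp add: add_pos_pos)
  have "((\<lambda>T. exp T * P / (exp T * P + Q)) has_real_derivative
     ((exp T * P) * (exp T * P + Q) - (exp T * P) * (exp T * P)) / ((exp T * P + Q) * (exp T * P + Q))) (at T)"
    using pos by (auto intro!: derivative_eq_intros)
  moreover have "((exp T * P) * (exp T * P + Q) - (exp T * P) * (exp T * P)) / ((exp T * P + Q) * (exp T * P + Q)) = a * (1 - a)"
    using pos unfolding a_def by (simp add: field_simps)
  ultimately show ?thesis by simp
qed

lemma L_deriv:
  fixes P Q T :: real assumes "P > 0" "Q > 0"
  defines "a \<equiv> exp T * P / (exp T * P + Q)"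
  shows "((\<lambda>T. - ln (1 - exp T * P / (exp T * P + Q))) has_real_derivative a) (at T)"
proof -
  have b: "a < 1" "0 < a" using acc_bounds[OF assms(1,2)] unfolding a_def by auto
  have d: "((\<lambda>T. exp T * P / (exp T * P + Q)) has_real_derivative a * (1 - a)) (at T)"
    using acc_deriv[OF assms(1,2), of T] unfolding a_def by simp
  have "((\<lambda>T. - ln (1 - exp T * P / (exp T * P + Q))) has_real_derivative
      - (inverse (1 - a) * (- (a * (1 - a))))) (at T)"
    apply (rule DERIV_minus)
    apply (rule DERIV_chain2[where f=ln])
     apply (unfold a_def)[1]
     apply (rule DERIV_ln) using b apply (simp add: a_def)
    using DERIV_diff[OF DERIV_const d] by simp
  moreover have "- (inverse (1 - a) * (- (a * (1 - a)))) = a" using b by (simp add: field_simps)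
  ultimately show ?thesis by metis
qed

lemma cheb:
  fixes w a l :: "'z \<Rightarrow> real"
  assumes "finite S" "\<forall>i\<in>S. w i \<ge> 0"
    and mon: "\<And>i j. i \<in> S \<Longrightarrow> j \<in> S \<Longrightarrow> (a i - a j) * (l j - l i) \<le> 0"
  shows "(\<Sum>i\<in>S. w i) * (\<Sum>j\<in>S. w j * (1 - a j) * l j) \<le> (\<Sum>i\<in>S. w i * l i) * (\<Sum>j\<in>S. w j * (1 - a j))"
proof -
  define X where "X i j = w i * w j * (1 - a j) * (l j - l i)" for i j
  have eq: "(\<Sum>i\<in>S. w i) * (\<Sum>j\<in>S. w j * (1 - a j) * l j) - (\<Sum>i\<in>S. w i * l i) * (\<Sum>j\<in>S. w j * (1 - a j))
     = (\<Sum>i\<in>S. \<Sum>j\<in>S. X i j)"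
    unfolding X_def sum_product sum_subtractf[symmetric]
    by (intro sum.cong refl) (simp add: algebra_simps)
  have sw: "(\<Sum>i\<in>S. \<Sum>j\<in>S. X i j) = (\<Sum>i\<in>S. \<Sum>j\<in>S. X j i)" by (rule sum.swap)
  have "2 * (\<Sum>i\<in>S. \<Sum>j\<in>S. X i j) = (\<Sum>i\<in>S. \<Sum>j\<in>S. X i j + X j i)"
    using sw by (simp add: sum.distrib)
  also have "\<dots> \<le> 0"
  proof (intro sum_nonpos)
    fix i j assume ij: "i \<in> S" "j \<in> S"
    have "X i j + X j i = (w i * w j) * ((a i - a j) * (l j - l i))"
      unfolding X_def by (simp add: algebra_simps)
    also have "\<dots> \<le> 0" using assms(2) ij mon[OF ij]
      by (intro mult_nonneg_nonpos[OF mult_nonneg_nonneg]) auto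
    finally show "X i j + X j i \<le> 0" .
  qed
  finally show ?thesis using eq by linarith
qed


theorem corollary1:
  fixes Zs :: "'z set" and p q :: "'z \<Rightarrow> real"
  assumes "finite Zs"
    and "\<forall>z\<in>Zs. p z \<ge> 0"
    and "(\<Sum>z\<in>Zs. p z) > 0"
    and "\<forall>z\<in>Zs. q z > 0"
    and "(\<Sum>z\<in>Zs. q z) = 1"
  shows "antimono (\<lambda>T. RELBO Zs p q T) \<and> antimono (\<lambda>T. expected_proposals Zs p q T)"
proof -
  define Zp where "Zp = {z\<in>Zs. 0 < p z}"
  have finZp: "finite Zp" using assms(1) unfolding Zp_def by simp
  have ZpZs: "Zp \<subseteq> Zs" unfolding Zp_def by auto
  have pos: "0 < p z" "0 < q z" if "z \<in> Zp" for z using that assms(4) unfolding Zp_def by auto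
  have ne: "Zp \<noteq> {}"
  proof
    assume "Zp = {}"
    then have "\<forall>z\<in>Zs. p z = 0" using assms(2) unfolding Zp_def by force
    then show False using assms(3) by simp
  qed
  define A where "A T z = accept p q T z" for T z
  define L where "L T z = - ln (1 - A T z)" for T z
  have A0: "A T z = 0" if "z \<in> Zs" "z \<notin> Zp" for T z
    using that assms(2) unfolding Zp_def A_def accept_def by force
  have Ab: "0 < A T z" "A T z < 1" if "z \<in> Zp" for T z
    using acc_bounds[OF pos[OF that]] unfolding A_def accept_def by auto
  define Z where "Z T = (\<Sum>z\<in>Zp. q z * A T z)" for T
  define N where "N T = (\<Sum>z\<in>Zp. q z * (A T z * L T z))" for T
  have ZR_eq: "ZR Zs p q T = Z T" for T
    unfolding ZR_def Z_def A_def[symmetric]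
    by (rule sum.mono_neutral_right[OF assms(1) ZpZs]) (use A0 in auto)
  have Zpos: "0 < Z T" for T
    unfolding Z_def using finZp ne pos Ab by (intro sum_pos) auto
  have RELBO_eq: "RELBO Zs p q T = ln (Z T) - T + N T / Z T" for T
  proof -
    have "RELBO Zs p q T = (\<Sum>z\<in>Zp. rdens Zs p q T z * ln (p z * ZR Zs p q T / (q z * accept p q T z)))"
      unfolding RELBO_def
      by (rule sum.mono_neutral_right[OF assms(1) ZpZs]) (use A0 in \<open>auto simp: rdens_def A_def\<close>)
    also have "\<dots> = (\<Sum>z\<in>Zp. (q z * A T z / Z T) * (ln (Z T) - T) + q z * (A T z * L T z) / Z T)"
    proof (rule sum.cong[OF refl])
      fix z assume z: "z \<in> Zp"
      note pz = pos[OF z] note ab = Ab[OF z, of T]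
      have e: "p z * Z T / (q z * A T z) = Z T / (exp T * (1 - A T z))"
      proof -
        have d: "exp T * p z + q z > 0" using pz by (simp add: add_pos_pos)
        have "1 - A T z = q z / (exp T * p z + q z)" unfolding A_def accept_def using d by (simp add: field_simps)
        then show ?thesis using pz d unfolding A_def accept_def by (simp add: field_simps)
      qed
      have lneq: "ln (Z T / (exp T * (1 - A T z))) = ln (Z T) - T + L T z"
        using Zpos[of T] ab unfolding L_def by (simp add: ln_div ln_mult)
      have "rdens Zs p q T z * ln (p z * ZR Zs p q T / (q z * accept p q T z)) =
          (q z * A T z / Z T) * ln (Z T / (exp T * (1 - A T z)))"
        using e unfolding rdens_def ZR_eq A_def[symmetric] by simp
      also have "\<dots> = (q z * A T z / Z T) * (ln (Z T) - T + L T z)" unfolding lneq ..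
      also have "\<dots> = (q z * A T z / Z T) * (ln (Z T) - T) + q z * (A T z * L T z) / Z T"
        by (simp add: ring_distribs)
      finally show "rdens Zs p q T z * ln (p z * ZR Zs p q T / (q z * accept p q T z)) =
          (q z * A T z / Z T) * (ln (Z T) - T) + q z * (A T z * L T z) / Z T" .
    qed
    also have "\<dots> = (\<Sum>z\<in>Zp. q z * A T z) / Z T * (ln (Z T) - T) + N T / Z T"
      unfolding N_def sum.distrib sum_divide_distrib[symmetric] sum_distrib_right[symmetric] by simp
    also have "\<dots> = ln (Z T) - T + N T / Z T"
      using Zpos[of T] unfolding Z_def[symmetric] by simp
    finally show ?thesis .
  qed
  define Zd where "Zd T = (\<Sum>z\<in>Zp. q z * (A T z * (1 - A T z)))" for T
  define Nd where "Nd T = (\<Sum>z\<in>Zp. q z * (A T z * (1 - A T z) * L T z + A T z * A T z))" for T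
  have dA: "((\<lambda>T. A T z) has_real_derivative A T z * (1 - A T z)) (at T)" if "z \<in> Zp" for z T
    using acc_deriv[OF pos[OF that], of T] unfolding A_def accept_def by simp
  have dL: "((\<lambda>T. L T z) has_real_derivative A T z) (at T)" if "z \<in> Zp" for z T
    using L_deriv[OF pos[OF that], of T] unfolding L_def A_def accept_def by simp
  have dZ: "(Z has_real_derivative Zd T) (at T)" for T
    unfolding Z_def[abs_def] Zd_def
    by (rule DERIV_sum, rule DERIV_cmult, rule dA)
  have dN: "(N has_real_derivative Nd T) (at T)" for T
    unfolding N_def[abs_def] Nd_def
    apply (rule DERIV_sum, rule DERIV_cmult)
    using DERIV_mult[OF dA dL] by (simp add: algebra_simps)
  define D where "D T = Zd T / Z T - 1 + (Nd T * Z T - N T * Zd T) / (Z T * Z T)" for T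
  have dR: "((\<lambda>T. RELBO Zs p q T) has_real_derivative D T) (at T)" for T
  proof -
    have "((\<lambda>T. ln (Z T) - T + N T / Z T) has_real_derivative
        inverse (Z T) * Zd T - 1 + (Nd T * Z T - N T * Zd T) / (Z T * Z T)) (at T)"
      apply (rule DERIV_add)
       apply (rule DERIV_diff)
        apply (rule DERIV_chain2[where f=ln, OF DERIV_ln[OF Zpos] dZ])
       apply (rule DERIV_ident)
      apply (rule DERIV_divide[OF dN dZ])
      using Zpos[of T] by simp
    then show ?thesis unfolding RELBO_eq D_def by (simp add: divide_inverse mult.commute)
  qed
  have Dle: "D T \<le> 0" for T
  proof -
    define w where "w z = q z * A T z" for z
    define a where "a z = A T z" for z
    define l where "l z = L T z" for z
    have w0: "\<forall>i\<in>Zp. w i \<ge> 0" unfolding w_def using pos Ab by (simp add: less_imp_le)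
    have mon: "(a i - a j) * (l j - l i) \<le> 0" if "i \<in> Zp" "j \<in> Zp" for i j
    proof (cases "a i \<le> a j")
      case True
      then have "l i \<le> l j" unfolding l_def L_def a_def using Ab[OF that(1), of T] Ab[OF that(2), of T] by simp
      then show ?thesis using True by (intro mult_nonpos_nonneg) auto
    next
      case False
      then have "l j \<le> l i" unfolding l_def L_def a_def using Ab[OF that(1), of T] Ab[OF that(2), of T] by simp
      then show ?thesis using False by (intro mult_nonneg_nonpos) auto
    qed
    have c: "(\<Sum>i\<in>Zp. w i) * (\<Sum>j\<in>Zp. w j * (1 - a j) * l j) \<le> (\<Sum>i\<in>Zp. w i * l i) * (\<Sum>j\<in>Zp. w j * (1 - a j))"
      by (rule cheb[OF finZp w0 mon])
    define S1 where "S1 = (\<Sum>j\<in>Zp. w j * (1 - a j) * l j)"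
    define S2 where "S2 = (\<Sum>j\<in>Zp. w j * a j)"
    have hZ: "Z T = (\<Sum>i\<in>Zp. w i)" unfolding Z_def w_def by simp
    have hN: "N T = (\<Sum>i\<in>Zp. w i * l i)" unfolding N_def w_def l_def by (simp add: algebra_simps)
    have hZd: "Zd T = (\<Sum>j\<in>Zp. w j * (1 - a j))" unfolding Zd_def w_def a_def by (simp add: algebra_simps)
    have hNd: "Nd T = S1 + S2" unfolding Nd_def S1_def S2_def w_def a_def l_def sum.distrib[symmetric]
      by (simp add: algebra_simps)
    have hZ2: "Z T = Zd T + S2" unfolding hZ hZd S2_def sum.distrib[symmetric] by (simp add: algebra_simps)
    have "D T * (Z T * Z T) = Zd T * Z T - Z T * Z T + (Nd T * Z T - N T * Zd T)"
      unfolding D_def using Zpos[of T] by (simp add: field_simps)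
    also have "\<dots> = Z T * S1 - N T * Zd T"
      unfolding hNd using hZ2 by (simp add: algebra_simps)
    finally have "D T = (Z T * S1 - N T * Zd T) / (Z T * Z T)"
      using Zpos[of T] by (simp add: field_simps)
    moreover have "Z T * S1 - N T * Zd T \<le> 0" using c unfolding hZ hN hZd S1_def by simp
    moreover have "Z T * Z T > 0" using Zpos[of T] by simp
    ultimately show ?thesis by (simp add: divide_nonpos_pos)
  qed
  have m1: "antimono (\<lambda>T. RELBO Zs p q T)"
    unfolding antimono_def
  proof (intro allI impI)
    fix x y :: real assume "x \<le> y"
    then show "RELBO Zs p q y \<le> RELBO Zs p q x"
      by (rule DERIV_nonpos_imp_nonincreasing) (use dR Dle in blast)
  qed
  have Zdnn: "Zd T \<ge> 0" for T
    unfolding Zd_def using pos Ab by (intro sum_nonneg) (simp add: less_imp_le)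
  have m2: "antimono (\<lambda>T. expected_proposals Zs p q T)"
    unfolding antimono_def expected_proposals_def ZR_eq
  proof (intro allI impI)
    fix x y :: real assume "x \<le> y"
    then have "Z x \<le> Z y"
      by (rule DERIV_nonneg_imp_nondecreasing) (use dZ Zdnn in blast)
    then show "1 / Z y \<le> 1 / Z x" using Zpos[of x] by (intro divide_left_mono) (auto intro: mult_pos_pos)
  qed
  show ?thesis using m1 m2 by blast
qed

end
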